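(* Let $(S,d)$ be a finite metric space partitioned into two disjoint groups $S=S_1\cup S_2$, let $k_1,k_2$ be nonnegative integers with $k=k_1+k_2$, and let $r^*$ be the optimal radius of the fair $k$-center problem. Suppose the points arrive in a stream in which all points of $S_1$ arrive before all points of $S_2$, and let $\Gamma_1',\Gamma_2',\Gamma_{sub}$ be produced by Algorithm B (described in the context) with $\lambda=2r^*$. Then there is a subset $\Gamma_1''\subseteq\Gamma_1'$ all of whose elements have replacements, such that with $\Gamma'_{sub}=\{\sigma(c):c\in\Gamma_1''\}$ the set $C=\Gamma_2'\cup(\Gamma_1'\setminus\Gamma_1'')\cup\Gamma'_{sub}$ is a feasible solution of the fair $k$-center problem with $d(s,C)\le 3r^*$ for every $s\in S$.
   Context: Fair $k$-center: $C\subseteq S$ is feasible if $|C\cap S_l|\le k_l$ for $l=1,2$; cost $\max_{s\in S}d(s,C)$, $d(s,C)=\min_{c\in C}d(s,c)$, $d(s,\emptyset)=\infty$; $r^*$ is the minimum cost over feasible $C$. Algorithm B (parameter $\lambda=2r^*$): initialize $\Gamma_1'=\Gamma_2'=\Gamma_{sub}=\emptyset$. Upon each arriving $i\in S_1$: if $d(i,\Gamma_1')>\lambda$, add $i$ to $\Gamma_1'$. Upon each arriving $i\in S_2$: if $|\Gamma_1'|\le k_1$, then add $i$ to $\Gamma_2'$ iff $d(i,\Gamma_1')>3\lambda/2$ and $d(i,\Gamma_2')>\lambda$; otherwise ($|\Gamma_1'|>k_1$), add $i$ to $\Gamma_2'$ iff $d(i,\Gamma_1'\cup\Gamma_2')>\lambda$,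 and, in addition, if there is a point $j\in\Gamma_1'$ that has no replacement yet and satisfies $d(i,j)\le\lambda/2$, add $i$ to $\Gamma_{sub}$ and designate $i$ as the replacement $\sigma(j)$ of such a $j$. Output $\Gamma_1',\Gamma_2',\Gamma_{sub}$. *)

theory Defs
  imports "HOL-Library.Extended_Real"
begin

definition metric_on :: "'a set \<Rightarrow> ('a \<Rightarrow> 'a \<Rightarrow> real) \<Rightarrow> bool" where
  "metric_on S d \<longleftrightarrow>
     (\<forall>x\<in>S. \<forall>y\<in>S. d x y \<ge> 0 \<and> (d x y = 0 \<longleftrightarrow> x = y) \<and> d x y = d y x) \<and>
     (\<forall>x\<in>S. \<forall>y\<in>S. \<forall>z\<in>S. d x z \<le> d x y + d y z)"

text \<open>d(s,C) = min over c in C of d(s,c), with d(s,{}) = infinity (Inf of the empty set).\<close>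
definition dist_set :: "('a \<Rightarrow> 'a \<Rightarrow> real) \<Rightarrow> 'a \<Rightarrow> 'a set \<Rightarrow> ereal" where
  "dist_set d s C = (INF c\<in>C. ereal (d s c))"

definition fair_feasible :: "'a set \<Rightarrow> 'a set \<Rightarrow> nat \<Rightarrow> nat \<Rightarrow> 'a set \<Rightarrow> bool" where
  "fair_feasible S1 S2 k1 k2 C \<longleftrightarrow>
     C \<subseteq> S1 \<union> S2 \<and> card (C \<inter> S1) \<le> k1 \<and> card (C \<inter> S2) \<le> k2"

definition fkc_cost :: "('a \<Rightarrow> 'a \<Rightarrow> real) \<Rightarrow> 'a set \<Rightarrow> 'a set \<Rightarrow> ereal" where
  "fkc_cost d S C = (SUP s\<in>S. dist_set d s C)"

definition opt_radius :: "('a \<Rightarrow> 'a \<Rightarrow> real) \<Rightarrow> 'a set \<Rightarrow> 'a set \<Rightarrow> nat \<Rightarrow> nat \<Rightarrow> ereal" where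
  "opt_radius d S1 S2 k1 k2 =
     (INF C\<in>{C. fair_feasible S1 S2 k1 k2 C}. fkc_cost d (S1 \<union> S2) C)"

text \<open>State of Algorithm B: (Gamma_1', Gamma_2', Gamma_sub, sigma), sigma the partial replacement map.\<close>
type_synonym 'a algB_state = "'a set \<times> 'a set \<times> 'a set \<times> ('a \<Rightarrow> 'a option)"

text \<open>One step of Algorithm B on arriving point i (parameter lam = lambda).
  The choice of j in the replacement step is left nondeterministic.\<close>
inductive algB_step ::
  "('a \<Rightarrow> 'a \<Rightarrow> real) \<Rightarrow> 'a set \<Rightarrow> 'a set \<Rightarrow> nat \<Rightarrow> ereal \<Rightarrow> 'a \<Rightarrow> 'a algB_state \<Rightarrow> 'a algB_state \<Rightarrow> bool"
  for d S1 S2 k1 lam where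
  s1: "i \<in> S1 \<Longrightarrow>
       algB_step d S1 S2 k1 lam i (G1, G2, Gs, \<sigma>)
         ((if dist_set d i G1 > lam then insert i G1 else G1), G2, Gs, \<sigma>)"
| s2_small: "i \<in> S2 \<Longrightarrow> card G1 \<le> k1 \<Longrightarrow>
       algB_step d S1 S2 k1 lam i (G1, G2, Gs, \<sigma>)
         (G1, (if dist_set d i G1 > 3 * lam / 2 \<and> dist_set d i G2 > lam
               then insert i G2 else G2), Gs, \<sigma>)"
| s2_big_sub: "i \<in> S2 \<Longrightarrow> card G1 > k1 \<Longrightarrow>
       j \<in> G1 \<Longrightarrow> \<sigma> j = None \<Longrightarrow> ereal (d i j) \<le> lam / 2 \<Longrightarrow>
       algB_step d S1 S2 k1 lam i (G1, G2, Gs, \<sigma>)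
         (G1, (if dist_set d i (G1 \<union> G2) > lam then insert i G2 else G2),
          insert i Gs, \<sigma>(j \<mapsto> i))"
| s2_big_nosub: "i \<in> S2 \<Longrightarrow> card G1 > k1 \<Longrightarrow>
       \<not> (\<exists>j\<in>G1. \<sigma> j = None \<and> ereal (d i j) \<le> lam / 2) \<Longrightarrow>
       algB_step d S1 S2 k1 lam i (G1, G2, Gs, \<sigma>)
         (G1, (if dist_set d i (G1 \<union> G2) > lam then insert i G2 else G2), Gs, \<sigma>)"

inductive algB_run ::
  "('a \<Rightarrow> 'a \<Rightarrow> real) \<Rightarrow> 'a set \<Rightarrow> 'a set \<Rightarrow> nat \<Rightarrow> ereal \<Rightarrow> 'a list \<Rightarrow> 'a algB_state \<Rightarrow> 'a algB_state \<Rightarrow> bool"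
  for d S1 S2 k1 lam where
  Nil: "algB_run d S1 S2 k1 lam [] st st"
| Cons: "algB_step d S1 S2 k1 lam i st st' \<Longrightarrow> algB_run d S1 S2 k1 lam xs st' st'' \<Longrightarrow>
         algB_run d S1 S2 k1 lam (i # xs) st st''"

end

theory Submission
  imports Defs
begin

lemma ds_gt: "finite C \<Longrightarrow> ereal t < dist_set d s C \<longleftrightarrow> (\<forall>c\<in>C. t < d s c)"
proof (cases "C = {}")
  case True then show ?thesis by (simp add: dist_set_def top_ereal_def)
next
  case False
  assume f: "finite C"
  have "dist_set d s C = Min ((\<lambda>c. ereal (d s c)) ` C)"
    unfolding dist_set_def using f False by (simp add: cInf_eq_Min)
  then show ?thesis using f False by simp
qed

lemma ds_le: "finite C \<Longrightarrow> dist_set d s C \<le> ereal t \<longleftrightarrow> (\<exists>c\<in>C. d s c \<le> t)"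
  using ds_gt[of C t d s] by (auto simp: not_less)

lemma ds_le2: "c \<in> C \<Longrightarrow> d s c \<le> t \<Longrightarrow> dist_set d s C \<le> ereal t"
  unfolding dist_set_def by (rule INF_lower2) auto

lemma inf_attained:
  fixes f :: "'b \<Rightarrow> ereal"
  assumes "finite A" "A \<noteq> {}" shows "\<exists>x\<in>A. (INF y\<in>A. f y) = f x"
proof -
  have "(INF y\<in>A. f y) = Min (f ` A)" using assms by (simp add: cInf_eq_Min)
  moreover have "Min (f ` A) \<in> f ` A" using assms by simp
  ultimately show ?thesis by auto
qed

lemma run_inv:
  assumes "algB_run d S1 S2 k1 lam xs st st'" "I P st"
    "\<And>i P s s'. algB_step d S1 S2 k1 lam i s s' \<Longrightarrow> i \<in> set xs \<Longrightarrow> I P s \<Longrightarrow> I (insert i P) s'"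
  shows "I (P \<union> set xs) st'"
  using assms
proof (induction arbitrary: P rule: algB_run.induct)
  case (Nil st) then show ?case by simp
next
  case (Cons i st st' xs st'')
  have "I (insert i P) st'" using Cons.prems Cons.hyps(1) by auto
  then have "I (insert i P \<union> set xs) st''" by (rule Cons.IH) (use Cons.prems(2) in auto)
  then show ?case by simp
qed

lemma run_append: "algB_run d S1 S2 k1 lam (xs @ ys) a c \<Longrightarrow>
   \<exists>b. algB_run d S1 S2 k1 lam xs a b \<and> algB_run d S1 S2 k1 lam ys b c"
proof (induction xs arbitrary: a)
  case Nil then show ?case using algB_run.Nil by fastforce
next
  case (Cons i xs)
  from Cons.prems obtain a' where "algB_step d S1 S2 k1 lam i a a'" "algB_run d S1 S2 k1 lam (xs @ ys) a' c"
    by (auto elim: algB_run.cases)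
  with Cons.IH show ?case by (meson algB_run.Cons)
qed

context
  fixes d :: "'a \<Rightarrow> 'a \<Rightarrow> real" and S1 S2 :: "'a set" and k1 :: nat and r :: real
  assumes met: "metric_on (S1 \<union> S2) d" and disj: "S1 \<inter> S2 = {}" and r0: "0 \<le> r"
begin

lemma dpos: "x \<in> S1 \<union> S2 \<Longrightarrow> y \<in> S1 \<union> S2 \<Longrightarrow> 0 \<le> d x y"
  using met unfolding metric_on_def by blast
lemma dzero: "x \<in> S1 \<union> S2 \<Longrightarrow> d x x = 0"
  using met unfolding metric_on_def by blast
lemma deq: "x \<in> S1 \<union> S2 \<Longrightarrow> y \<in> S1 \<union> S2 \<Longrightarrow> d x y = 0 \<Longrightarrow> x = y"
  using met unfolding metric_on_def by blast
lemma dsym: "x \<in> S1 \<union> S2 \<Longrightarrow> y \<in> S1 \<union> S2 \<Longrightarrow> d x y = d y x"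
  using met unfolding metric_on_def by blast
lemma dtri: "x \<in> S1 \<union> S2 \<Longrightarrow> y \<in> S1 \<union> S2 \<Longrightarrow> z \<in> S1 \<union> S2 \<Longrightarrow> d x z \<le> d x y + d y z"
  using met unfolding metric_on_def by blast

definition sep :: "'a set \<Rightarrow> bool" where
  "sep A \<longleftrightarrow> (\<forall>a\<in>A. \<forall>b\<in>A. a \<noteq> b \<longrightarrow> 2 * r < d a b)"

definition inv1 :: "'a set \<Rightarrow> 'a algB_state \<Rightarrow> bool" where
  "inv1 P st = (case st of (G1, G2, Gs, \<sigma>) \<Rightarrow>
     G1 \<subseteq> S1 \<and> finite G1 \<and> sep G1 \<and> (\<forall>s\<in>P. \<exists>g\<in>G1. d s g \<le> 2 * r) \<and> G2 = {} \<and> \<sigma> = Map.empty)"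

lemma step1:
  assumes st: "algB_step d S1 S2 k1 (2 * ereal r) i s s'" and i: "i \<in> S1" and inv: "inv1 P s"
  shows "inv1 (insert i P) s'"
proof -
  obtain G1 G2 Gs \<sigma> where s: "s = (G1, G2, Gs, \<sigma>)" by (cases s) auto
  have iS2: "i \<notin> S2" using i disj by auto
  from st[unfolded s] have s': "s' = ((if dist_set d i G1 > 2 * ereal r then insert i G1 else G1), G2, Gs, \<sigma>)"
    by cases (use iS2 in auto)
  from inv[unfolded s inv1_def] have G1: "G1 \<subseteq> S1" "finite G1" "sep G1" "\<forall>s\<in>P. \<exists>g\<in>G1. d s g \<le> 2 * r"
    "G2 = {}" "\<sigma> = Map.empty" by auto
  show ?thesis
  proof (cases "dist_set d i G1 > 2 * ereal r")
    case True
    then have far: "\<forall>g\<in>G1. 2 * r < d i g" using ds_gt[OF G1(2), of "2*r" d i] by simp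
    have "sep (insert i G1)" unfolding sep_def
    proof (intro ballI impI)
      fix a b assume ab: "a \<in> insert i G1" "b \<in> insert i G1" "a \<noteq> b"
      show "2 * r < d a b"
      proof -
        { assume "a = i" then have ?thesis using ab far by auto }
        moreover { assume "b = i" "a \<noteq> i" then have ?thesis using ab far dsym[of a i] G1(1) i by auto }
        moreover { assume "a \<noteq> i" "b \<noteq> i" then have ?thesis using ab G1(3) unfolding sep_def by auto }
        ultimately show ?thesis by blast
      qed
    qed
    moreover have "d i i \<le> 2 * r" using dzero[of i] i r0 by auto
    ultimately show ?thesis using True G1 i unfolding s' inv1_def by auto
  next
    case False
    then have "\<exists>g\<in>G1. d i g \<le> 2 * r" using ds_le[OF G1(2), of d i "2*r"] by (simp add: not_less)
    then show ?thesis using False G1 unfolding s' inv1_def by auto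
  qed
qed


definition inv2s :: "'a set \<Rightarrow> 'a set \<Rightarrow> 'a algB_state \<Rightarrow> bool" where
  "inv2s G1m P st = (case st of (G1, G2, Gs, \<sigma>) \<Rightarrow>
     G1 = G1m \<and> G2 \<subseteq> S2 \<and> finite G2 \<and> sep G2 \<and> (\<forall>g\<in>G2. \<forall>j\<in>G1. 3 * r < d g j) \<and>
     (\<forall>s\<in>P. (\<exists>g\<in>G1. d s g \<le> 3 * r) \<or> (\<exists>g\<in>G2. d s g \<le> 2 * r)))"

lemma step2s:
  assumes st: "algB_step d S1 S2 k1 (2 * ereal r) i s s'" and i: "i \<in> S2" and inv: "inv2s G1m P s"
    and G1m: "card G1m \<le> k1" "finite G1m" "G1m \<subseteq> S1"
  shows "inv2s G1m (insert i P) s'"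
proof -
  obtain G1 G2 Gs \<sigma> where s: "s = (G1, G2, Gs, \<sigma>)" by (cases s) auto
  have iS1: "i \<notin> S1" using i disj by auto
  from inv[unfolded s inv2s_def] have G: "G1 = G1m" "G2 \<subseteq> S2" "finite G2" "sep G2"
     "\<forall>g\<in>G2. \<forall>j\<in>G1. 3 * r < d g j"
     "\<forall>s\<in>P. (\<exists>g\<in>G1. d s g \<le> 3 * r) \<or> (\<exists>g\<in>G2. d s g \<le> 2 * r)" by auto
  from st[unfolded s] have s': "s' = (G1, (if dist_set d i G1 > 3 * (2 * ereal r) / 2 \<and> dist_set d i G2 > 2 * ereal r
               then insert i G2 else G2), Gs, \<sigma>)"
    by cases (use iS1 G G1m in auto)
  show ?thesis
  proof (cases "dist_set d i G1 > 3 * (2 * ereal r) / 2 \<and> dist_set d i G2 > 2 * ereal r")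
    case True
    then have far1: "\<forall>g\<in>G1. 3 * r < d i g" using ds_gt[of G1 "3*r" d i] G G1m by simp
    from True have far2: "\<forall>g\<in>G2. 2 * r < d i g" using ds_gt[OF G(3), of "2*r" d i] by simp
    have "sep (insert i G2)" unfolding sep_def
    proof (intro ballI impI)
      fix a b assume ab: "a \<in> insert i G2" "b \<in> insert i G2" "a \<noteq> b"
      show "2 * r < d a b"
      proof -
        { assume "a = i" then have ?thesis using ab far2 by auto }
        moreover { assume "b = i" "a \<noteq> i" then have ?thesis using ab far2 dsym[of a i] G(2) i by auto }
        moreover { assume "a \<noteq> i" "b \<noteq> i" then have ?thesis using ab G(4) unfolding sep_def by auto }
        ultimately show ?thesis by blast
      qed
    qed
    moreover have "\<forall>j\<in>G1. 3 * r < d i j" using far1 by auto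
    moreover have "d i i \<le> 2 * r" using dzero[of i] i r0 by auto
    ultimately show ?thesis using True G i unfolding s' inv2s_def by auto
  next
    case False
    then have "(\<exists>g\<in>G1. d i g \<le> 3 * r) \<or> (\<exists>g\<in>G2. d i g \<le> 2 * r)"
      using ds_le[of G1 d i "3*r"] ds_le[OF G(3), of d i "2*r"] G G1m by (auto simp: not_less)
    then show ?thesis using False G unfolding s' inv2s_def by auto
  qed
qed

definition inv2b :: "'a set \<Rightarrow> 'a set \<Rightarrow> 'a algB_state \<Rightarrow> bool" where
  "inv2b G1m P st = (case st of (G1, G2, Gs, \<sigma>) \<Rightarrow>
     G1 = G1m \<and> G2 \<subseteq> S2 \<and> finite G2 \<and> sep (G1 \<union> G2) \<and>
     (\<forall>j v. \<sigma> j = Some v \<longrightarrow> j \<in> G1 \<and> v \<in> S2 \<and> d v j \<le> r) \<and>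
     (\<forall>s\<in>P. \<exists>g\<in>G1 \<union> G2. d s g \<le> 2 * r) \<and>
     (\<forall>s\<in>P. \<forall>j\<in>G1. d s j \<le> r \<longrightarrow> \<sigma> j \<noteq> None))"

lemma step2b:
  assumes st: "algB_step d S1 S2 k1 (2 * ereal r) i s s'" and i: "i \<in> S2" and inv: "inv2b G1m P s"
    and G1m: "k1 < card G1m" "finite G1m" "G1m \<subseteq> S1"
  shows "inv2b G1m (insert i P) s'"
proof -
  obtain G1 G2 Gs \<sigma> where s: "s = (G1, G2, Gs, \<sigma>)" by (cases s) auto
  have iS1: "i \<notin> S1" using i disj by auto
  from inv[unfolded s inv2b_def] have G: "G1 = G1m" "G2 \<subseteq> S2" "finite G2" "sep (G1 \<union> G2)"
     "\<forall>j v. \<sigma> j = Some v \<longrightarrow> j \<in> G1 \<and> v \<in> S2 \<and> d v j \<le> r"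
     "\<forall>s\<in>P. \<exists>g\<in>G1 \<union> G2. d s g \<le> 2 * r"
     "\<forall>s\<in>P. \<forall>j\<in>G1. d s j \<le> r \<longrightarrow> \<sigma> j \<noteq> None" by auto
  define G2' where "G2' = (if dist_set d i (G1 \<union> G2) > 2 * ereal r then insert i G2 else G2)"
  have fin: "finite (G1 \<union> G2)" using G G1m by auto
  have G2'a: "G2' \<subseteq> S2" "finite G2'" using G i unfolding G2'_def by auto
  have G2'sep: "sep (G1 \<union> G2')"
  proof (cases "dist_set d i (G1 \<union> G2) > 2 * ereal r")
    case True
    then have far: "\<forall>g\<in>G1 \<union> G2. 2 * r < d i g" using ds_gt[OF fin, of "2*r" d i] by simp
    show ?thesis unfolding sep_def
    proof (intro ballI impI)
      fix a b assume ab: "a \<in> G1 \<union> G2'" "b \<in> G1 \<union> G2'" "a \<noteq> b"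
      show "2 * r < d a b"
      proof -
        { assume "a = i" then have ?thesis using ab far True unfolding G2'_def by auto }
        moreover { assume "b = i" "a \<noteq> i" then have ?thesis using ab far dsym[of a i] G(1,2) G1m i True
            unfolding G2'_def by auto }
        moreover { assume "a \<noteq> i" "b \<noteq> i" then have ?thesis using ab G(4) True unfolding sep_def G2'_def by auto }
        ultimately show ?thesis by blast
      qed
    qed
  next
    case False then show ?thesis using G(4) unfolding G2'_def by simp
  qed
  have cov: "\<exists>g\<in>G1 \<union> G2'. d i g \<le> 2 * r"
  proof (cases "dist_set d i (G1 \<union> G2) > 2 * ereal r")
    case True
    then have "i \<in> G2'" unfolding G2'_def by simp
    moreover have "d i i \<le> 2 * r" using dzero[of i] i r0 by auto
    ultimately show ?thesis by auto
  next
    case False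
    then have "\<exists>g\<in>G1 \<union> G2. d i g \<le> 2 * r" using ds_le[OF fin, of d i "2*r"] by (simp add: not_less)
    then show ?thesis unfolding G2'_def by auto
  qed
  have G1S: "G1 \<subseteq> S1 \<union> S2" using G G1m by auto
  have uniq: "j = j'" if "j \<in> G1" "j' \<in> G1" "d i j \<le> r" "d i j' \<le> r" for j j'
  proof (rule ccontr)
    assume ne: "j \<noteq> j'"
    have "d j j' \<le> d j i + d i j'" using dtri[of j i j'] that G1S i by auto
    also have "\<dots> = d i j + d i j'" using dsym[of j i] that G1S i by auto
    finally have "d j j' \<le> 2 * r" using that by auto
    moreover have "2 * r < d j j'" using G(4) ne that unfolding sep_def by auto
    ultimately show False by auto
  qed
  from st[unfolded s] show ?thesis
  proof cases
    case s1 then show ?thesis using iS1 by simp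
  next
    case s2_small then show ?thesis using G(1) G1m(1) by simp
  next
    case (s2_big_sub j)
    have dij: "d i j \<le> r" using s2_big_sub by simp
    have s': "s' = (G1, G2', insert i Gs, \<sigma>(j \<mapsto> i))" using s2_big_sub unfolding G2'_def by simp
    have "\<forall>j0 v. (\<sigma>(j \<mapsto> i)) j0 = Some v \<longrightarrow> j0 \<in> G1 \<and> v \<in> S2 \<and> d v j0 \<le> r"
      proof (intro allI impI)
      fix j0 v assume h: "(\<sigma>(j \<mapsto> i)) j0 = Some v"
      show "j0 \<in> G1 \<and> v \<in> S2 \<and> d v j0 \<le> r"
      proof (cases "j0 = j")
        case True then show ?thesis using h s2_big_sub(4) dij i by simp
      next
        case False then show ?thesis using h G(5) by simp
      qed
    qed
    moreover have "\<forall>s\<in>insert i P. \<exists>g\<in>G1 \<union> G2'. d s g \<le> 2 * r"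
      using cov G(6) unfolding G2'_def by auto
    moreover have "\<forall>s\<in>insert i P. \<forall>j0\<in>G1. d s j0 \<le> r \<longrightarrow> (\<sigma>(j \<mapsto> i)) j0 \<noteq> None"
      proof (intro ballI impI)
      fix s0 j0 assume h: "s0 \<in> insert i P" "j0 \<in> G1" "d s0 j0 \<le> r"
      show "(\<sigma>(j \<mapsto> i)) j0 \<noteq> None"
      proof (cases "s0 = i")
        case True then have "j0 = j" using uniq[of j j0] h s2_big_sub(4) dij by simp
        then show ?thesis by simp
      next
        case False then have "\<sigma> j0 \<noteq> None" using h G(7) by blast
        then show ?thesis by simp
      qed
    qed
    ultimately show ?thesis using G(1) G2'a G2'sep unfolding s' inv2b_def prod.case by blast
  next
    case s2_big_nosub
    have s': "s' = (G1, G2', Gs, \<sigma>)" using s2_big_nosub unfolding G2'_def by simp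
    have "\<forall>s\<in>insert i P. \<exists>g\<in>G1 \<union> G2'. d s g \<le> 2 * r"
      using cov G(6) unfolding G2'_def by auto
    moreover have "\<forall>s\<in>insert i P. \<forall>j0\<in>G1. d s j0 \<le> r \<longrightarrow> \<sigma> j0 \<noteq> None"
      proof (intro ballI impI)
      fix s0 j0 assume h: "s0 \<in> insert i P" "j0 \<in> G1" "d s0 j0 \<le> r"
      show "\<sigma> j0 \<noteq> None"
      proof (cases "s0 = i")
        case True
        have nx: "\<not> (\<exists>j\<in>G1. \<sigma> j = None \<and> d i j \<le> r)" using s2_big_nosub by auto
        have "d i j0 \<le> r" using True h(3) by simp
        show ?thesis
        proof
          assume "\<sigma> j0 = None"
          then have "\<exists>j\<in>G1. \<sigma> j = None \<and> d i j \<le> r" using h(2) \<open>d i j0 \<le> r\<close> by blast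
          with nx show False by blast
        qed
      next
        case False then show ?thesis using h G(7) by blast
      qed
    qed
    ultimately show ?thesis using G(1,5) G2'a G2'sep unfolding s' inv2b_def prod.case by blast
  qed
qed


lemma cen_ex:
  assumes cov: "\<forall>s\<in>S1 \<union> S2. \<exists>c\<in>Cs. d s c \<le> r"
  obtains cen where "\<And>s. s \<in> S1 \<union> S2 \<Longrightarrow> cen s \<in> Cs \<and> d s (cen s) \<le> r"
  using cov by metis

lemma cen_inj:
  assumes cen: "\<And>s. s \<in> S1 \<union> S2 \<Longrightarrow> cen s \<in> Cs \<and> d s (cen s) \<le> r"
    and A: "A \<subseteq> S1 \<union> S2" "sep A" and Cs: "Cs \<subseteq> S1 \<union> S2"
  shows "inj_on cen A"
proof (rule inj_onI)
  fix a b assume ab: "a \<in> A" "b \<in> A" "cen a = cen b"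
  show "a = b"
  proof (rule ccontr)
    assume ne: "a \<noteq> b"
    have c: "cen a \<in> S1 \<union> S2" using cen[of a] ab A Cs by auto
    have "d a b \<le> d a (cen a) + d (cen a) b" using dtri[of a "cen a" b] ab A c by auto
    also have "d (cen a) b = d b (cen b)" using dsym[of "cen a" b] ab A c by auto
    finally have dab: "d a b \<le> d a (cen a) + d b (cen b)" .
    have aS: "a \<in> S1 \<union> S2" and bS: "b \<in> S1 \<union> S2" using ab A by auto
    have "d a (cen a) \<le> r" "d b (cen b) \<le> r" using cen[OF aS] cen[OF bS] by auto
    then have "d a b \<le> 2 * r" using dab by simp
    moreover have "2 * r < d a b" using A(2) ab ne unfolding sep_def by auto
    ultimately show False by simp
  qed
qed

lemma sep_mono: "sep A \<Longrightarrow> B \<subseteq> A \<Longrightarrow> sep B"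
  unfolding sep_def by blast

lemma main_real:
  assumes fin: "finite (S1 \<union> S2)" and xs1: "set xs1 = S1" and xs2: "set xs2 = S2"
    and run: "algB_run d S1 S2 k1 (2 * ereal r) (xs1 @ xs2) ({}, {}, {}, Map.empty) (G1, G2, Gsub, \<sigma>)"
    and Csf: "fair_feasible S1 S2 k1 k2 Cs" and cov: "\<forall>s\<in>S1 \<union> S2. \<exists>c\<in>Cs. d s c \<le> r"
  shows "\<exists>G1''\<subseteq>G1. (\<forall>c\<in>G1''. \<sigma> c \<noteq> None) \<and>
           (let C = G2 \<union> (G1 - G1'') \<union> (\<lambda>c. the (\<sigma> c)) ` G1''
            in fair_feasible S1 S2 k1 k2 C \<and>
               (\<forall>s\<in>S1 \<union> S2. dist_set d s C \<le> 3 * ereal r))"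
proof -
  have CsS: "Cs \<subseteq> S1 \<union> S2" and Cs1: "card (Cs \<inter> S1) \<le> k1" and Cs2: "card (Cs \<inter> S2) \<le> k2"
    using Csf unfolding fair_feasible_def by auto
  have finCs: "finite Cs" using CsS fin finite_subset by blast
  have fin1: "finite S1" and fin2: "finite S2" using fin by auto
  obtain cen where cen: "\<And>s. s \<in> S1 \<union> S2 \<Longrightarrow> cen s \<in> Cs \<and> d s (cen s) \<le> r"
    using cen_ex[OF cov] by blast
  obtain stm where run1: "algB_run d S1 S2 k1 (2 * ereal r) xs1 ({}, {}, {}, Map.empty) stm"
    and run2: "algB_run d S1 S2 k1 (2 * ereal r) xs2 stm (G1, G2, Gsub, \<sigma>)"
    using run_append[OF run] by blast
  have i1: "inv1 {} ({}, {}, {}, Map.empty)" unfolding inv1_def sep_def by simp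
  have "inv1 ({} \<union> set xs1) stm"
    by (rule run_inv[OF run1, where I = inv1, OF i1]) (use step1 xs1 in blast)
  then have I1: "inv1 S1 stm" using xs1 by simp
  obtain G1m G2m Gsm \<sigma>m where stm: "stm = (G1m, G2m, Gsm, \<sigma>m)" by (cases stm) auto
  from I1[unfolded stm inv1_def] have H1: "G1m \<subseteq> S1" "finite G1m" "sep G1m"
    "\<forall>s\<in>S1. \<exists>g\<in>G1m. d s g \<le> 2 * r" "G2m = {}" "\<sigma>m = Map.empty" by auto
  have S1cov: "\<forall>s\<in>S1. \<exists>g\<in>G1. d s g \<le> 2 * r" if "G1 = G1m" using H1 that by simp
  show ?thesis
  proof (cases "card G1m \<le> k1")
    case True
    have i2: "inv2s G1m {} stm" unfolding stm inv2s_def sep_def using H1 by simp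
    have "inv2s G1m ({} \<union> set xs2) (G1, G2, Gsub, \<sigma>)"
      by (rule run_inv[OF run2, where I = "inv2s G1m", OF i2]) (use step2s xs2 True H1 in blast)
    then have I2: "G1 = G1m" "G2 \<subseteq> S2" "finite G2" "sep G2" "\<forall>g\<in>G2. \<forall>j\<in>G1. 3 * r < d g j"
      "\<forall>s\<in>S2. (\<exists>g\<in>G1. d s g \<le> 3 * r) \<or> (\<exists>g\<in>G2. d s g \<le> 2 * r)"
      unfolding inv2s_def using xs2 by auto
    define C where "C = G2 \<union> (G1 - {}) \<union> (\<lambda>c. the (\<sigma> c)) ` {}"
    have C: "C = G2 \<union> G1" unfolding C_def by simp
    have CS1: "C \<inter> S1 = G1" using C I2 H1 disj by auto
    have CS2: "C \<inter> S2 = G2" using C I2 H1 disj by auto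
    have cenS2: "cen g \<in> S2" if g: "g \<in> G2" for g
    proof (rule ccontr)
      assume "cen g \<notin> S2"
      moreover have cg: "cen g \<in> Cs" "d g (cen g) \<le> r" using cen[of g] g I2 by auto
      ultimately have "cen g \<in> S1" using CsS by auto
      then obtain g1 where g1: "g1 \<in> G1" "d (cen g) g1 \<le> 2 * r" using H1(4) I2(1) by auto
      have gS: "g \<in> S1 \<union> S2" using g I2(2) by auto
      have g1S: "g1 \<in> S1 \<union> S2" using g1 I2(1) H1(1) by auto
      have cS: "cen g \<in> S1 \<union> S2" using cg CsS by auto
      have "d g g1 \<le> d g (cen g) + d (cen g) g1"
        using dtri[OF gS cS g1S] .
      then have "d g g1 \<le> 3 * r" using cg g1 by auto
      moreover have "3 * r < d g g1" using I2(5) g g1 by auto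
      ultimately show False by simp
    qed
    have "card G2 \<le> card (Cs \<inter> S2)"
    proof (rule card_inj_on_le)
      show "inj_on cen G2" using cen_inj[OF cen _ I2(4) CsS] I2(2) by auto
      show "cen ` G2 \<subseteq> Cs \<inter> S2" using cen cenS2 I2(2) by auto
      show "finite (Cs \<inter> S2)" using finCs by simp
    qed
    then have k2: "card (C \<inter> S2) \<le> k2" using CS2 Cs2 by simp
    have k1: "card (C \<inter> S1) \<le> k1" using CS1 True I2(1) by simp
    have feas: "fair_feasible S1 S2 k1 k2 C"
      unfolding fair_feasible_def using k1 k2 C I2 H1 by auto
    have dist: "\<forall>s\<in>S1 \<union> S2. dist_set d s C \<le> 3 * ereal r"
    proof
      fix s assume s: "s \<in> S1 \<union> S2"
      have "\<exists>c\<in>C. d s c \<le> 3 * r"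
      proof (cases "s \<in> S1")
        case True
        then obtain g where "g \<in> G1" "d s g \<le> 2 * r" using H1(4) I2(1) by auto
        then show ?thesis using C r0 by force
      next
        case False
        then have "s \<in> S2" using s by auto
        then show ?thesis using I2(6) C r0 by force
      qed
      then obtain c where "c \<in> C" "d s c \<le> 3 * r" by blast
      then have "dist_set d s C \<le> ereal (3 * r)" by (rule ds_le2)
      then show "dist_set d s C \<le> 3 * ereal r" by simp
    qed
    show ?thesis
      by (rule exI[of _ "{}"]) (use feas dist in \<open>simp add: C_def Let_def\<close>)
  next
    case False
    then have big: "k1 < card G1m" by simp
    have i2: "inv2b G1m {} stm" unfolding stm inv2b_def using H1 by simp
    have "inv2b G1m ({} \<union> set xs2) (G1, G2, Gsub, \<sigma>)"
      by (rule run_inv[OF run2, where I = "inv2b G1m", OF i2]) (use step2b xs2 big H1 in blast)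
    then have I2: "G1 = G1m" "G2 \<subseteq> S2" "finite G2" "sep (G1 \<union> G2)"
      "\<forall>j v. \<sigma> j = Some v \<longrightarrow> j \<in> G1 \<and> v \<in> S2 \<and> d v j \<le> r"
      "\<forall>s\<in>S2. \<exists>g\<in>G1 \<union> G2. d s g \<le> 2 * r"
      "\<forall>s\<in>S2. \<forall>j\<in>G1. d s j \<le> r \<longrightarrow> \<sigma> j \<noteq> None"
      unfolding inv2b_def using xs2 by auto
    have G1S: "G1 \<subseteq> S1" "finite G1" using H1 I2 by auto
    define R where "R = {j\<in>G1. \<sigma> j \<noteq> None}"
    have RG: "R \<subseteq> G1" unfolding R_def by auto
    have injA: "inj_on cen (G1 \<union> G2)"
      using cen_inj[OF cen _ I2(4) CsS] I2(2) G1S by auto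
    have "card (G1 - R) \<le> card (Cs \<inter> S1)"
    proof (rule card_inj_on_le)
      show "inj_on cen (G1 - R)" using injA by (rule inj_on_subset) auto
      show "cen ` (G1 - R) \<subseteq> Cs \<inter> S1"
      proof
        fix x assume "x \<in> cen ` (G1 - R)"
        then obtain j where j: "j \<in> G1" "j \<notin> R" "x = cen j" by auto
        have jS: "j \<in> S1 \<union> S2" using j G1S by auto
        have cj: "cen j \<in> Cs" "d j (cen j) \<le> r" using cen[OF jS] by auto
        have "cen j \<notin> S2"
        proof
          assume c2: "cen j \<in> S2"
          have "d (cen j) j \<le> r" using dsym[of j "cen j"] jS c2 cj by auto
          then have "\<sigma> j \<noteq> None" using I2(7) c2 j by auto
          then show False using j unfolding R_def by auto
        qed
        then show "x \<in> Cs \<inter> S1" using cj CsS j by auto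
      qed
      show "finite (Cs \<inter> S1)" using finCs by simp
    qed
    then have cR: "card (G1 - R) \<le> k1" using Cs1 by simp
    have finR: "finite R" using RG G1S finite_subset by blast
    have "card G1 = card R + card (G1 - R)"
      using card_Diff_subset[OF finR RG] card_mono[OF G1S(2) RG] by simp
    then have mR: "card G1 - k1 \<le> card R" using cR by simp
    have "card (G1 \<union> G2) \<le> card Cs"
      by (rule card_inj_on_le[OF injA]) (use cen I2(2) G1S finCs in auto)
    moreover have "card (G1 \<union> G2) = card G1 + card G2"
      using card_Un_disjoint[OF G1S(2) I2(3)] G1S I2(2) disj by auto
    moreover have "Cs = (Cs \<inter> S1) \<union> (Cs \<inter> S2)" using CsS by auto
    then have "card Cs \<le> card (Cs \<inter> S1) + card (Cs \<inter> S2)" by (metis card_Un_le)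
    ultimately have tot: "card G1 + card G2 \<le> k1 + k2" using Cs1 Cs2 by simp
    obtain G1'' where G1'': "G1'' \<subseteq> R" "card G1'' = card G1 - k1"
      using obtain_subset_with_card_n[OF mR] by blast
    have G1''G: "G1'' \<subseteq> G1" using G1'' RG by auto
    have finG'': "finite G1''" using G1'' finR finite_subset by blast
    have some: "\<forall>c\<in>G1''. \<sigma> c \<noteq> None" using G1'' unfolding R_def by auto
    define img where "img = (\<lambda>c. the (\<sigma> c)) ` G1''"
    define C where "C = G2 \<union> (G1 - G1'') \<union> img"
    have imgS: "img \<subseteq> S2"
    proof
      fix v assume "v \<in> img"
      then obtain c where c: "c \<in> G1''" "v = the (\<sigma> c)" unfolding img_def by auto
      then obtain w where "\<sigma> c = Some w" using some by auto
      then show "v \<in> S2" using I2(5) c by auto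
    qed
    have CS1: "C \<inter> S1 = G1 - G1''" unfolding C_def using imgS I2(2) G1S disj by auto
    have CS2: "C \<inter> S2 = G2 \<union> img" unfolding C_def using imgS I2(2) G1S disj by auto
    have k1: "card (C \<inter> S1) \<le> k1"
      unfolding CS1 using card_Diff_subset[OF finG'' G1''G] G1''(2) big I2(1) by simp
    have "card (C \<inter> S2) \<le> card G2 + card img" unfolding CS2 by (rule card_Un_le)
    also have "card img \<le> card G1''" unfolding img_def by (rule card_image_le[OF finG''])
    finally have k2: "card (C \<inter> S2) \<le> k2" using tot G1''(2) big I2(1) by simp
    have feas: "fair_feasible S1 S2 k1 k2 C"
      unfolding fair_feasible_def using k1 k2 C_def I2 G1S imgS by auto
    have viaG1: "\<exists>c\<in>C. d s c \<le> t + r" if s: "s \<in> S1 \<union> S2" and g: "g \<in> G1" "d s g \<le> t" for s g t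
    proof (cases "g \<in> G1''")
      case False
      then have "g \<in> C" using g unfolding C_def by auto
      then show ?thesis using g r0 by force
    next
      case True
      then obtain v where v: "\<sigma> g = Some v" using some by auto
      then have vC: "v \<in> C" using True unfolding C_def img_def by force
      have vv: "v \<in> S2" "d v g \<le> r" using I2(5) v by auto
      have gS: "g \<in> S1 \<union> S2" using g G1S by auto
      have "d s v \<le> d s g + d g v" using dtri[of s g v] s gS vv by auto
      also have "d g v = d v g" using dsym[of g v] gS vv by auto
      finally have "d s v \<le> t + r" using vv g by auto
      then show ?thesis using vC by blast
    qed
    have dist: "\<forall>s\<in>S1 \<union> S2. dist_set d s C \<le> 3 * ereal r"
    proof
      fix s assume s: "s \<in> S1 \<union> S2"
      have "\<exists>c\<in>C. d s c \<le> 3 * r"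
      proof (cases "s \<in> S1")
        case True
        then obtain g where "g \<in> G1" "d s g \<le> 2 * r" using H1(4) I2(1) by auto
        then have "\<exists>c\<in>C. d s c \<le> 2 * r + r" using viaG1 s by blast
        then show ?thesis by auto
      next
        case False
        then have "s \<in> S2" using s by auto
        then obtain g where g: "g \<in> G1 \<union> G2" "d s g \<le> 2 * r" using I2(6) by blast
        show ?thesis
        proof (cases "g \<in> G2")
          case True then have "g \<in> C" unfolding C_def by auto
          then show ?thesis using g r0 by force
        next
          case False
          then have "\<exists>c\<in>C. d s c \<le> 2 * r + r" using viaG1 s g by blast
          then show ?thesis by auto
        qed
      qed
      then obtain c where "c \<in> C" "d s c \<le> 3 * r" by blast
      then have "dist_set d s C \<le> ereal (3 * r)" by (rule ds_le2)
      then show "dist_set d s C \<le> 3 * ereal r" by simp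
    qed
    show ?thesis
      by (rule exI[of _ G1'']) (use G1''G some feas dist in \<open>simp add: C_def img_def Let_def\<close>)
  qed
qed

end


lemma inf_run:
  assumes "algB_run d S1 S2 k1 \<infinity> xs ({}, {}, Gs, \<sigma>) (G1, G2, Gs', \<sigma>')"
  shows "G1 = {} \<and> G2 = {}"
proof -
  have "(\<lambda>P st. fst st = {} \<and> fst (snd st) = {}) ({} \<union> set xs) (G1, G2, Gs', \<sigma>')"
  proof (rule run_inv[OF assms])
    fix i P s s'
    assume st: "algB_step d S1 S2 k1 \<infinity> i s s'" and I: "fst s = {} \<and> fst (snd s) = {}"
    obtain a b c e where s: "s = (a, b, c, e)" by (cases s) auto
    from st[unfolded s] show "fst s' = {} \<and> fst (snd s') = {}"
      by cases (use I s in auto)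
  qed simp
  then show ?thesis by simp
qed

theorem mainTheorem9:
  fixes d :: "'a \<Rightarrow> 'a \<Rightarrow> real" and S1 S2 :: "'a set" and k1 k2 :: nat
    and xs1 xs2 :: "'a list"
    and G1 G2 Gsub :: "'a set" and \<sigma> :: "'a \<Rightarrow> 'a option"
  assumes "finite (S1 \<union> S2)"
    and "S1 \<inter> S2 = {}"
    and "metric_on (S1 \<union> S2) d"
    and "distinct (xs1 @ xs2)" and "set xs1 = S1" and "set xs2 = S2"
    and "algB_run d S1 S2 k1 (2 * opt_radius d S1 S2 k1 k2) (xs1 @ xs2)
           ({}, {}, {}, Map.empty) (G1, G2, Gsub, \<sigma>)"
  shows "\<exists>G1''\<subseteq>G1. (\<forall>c\<in>G1''. \<sigma> c \<noteq> None) \<and>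
           (let C = G2 \<union> (G1 - G1'') \<union> (\<lambda>c. the (\<sigma> c)) ` G1''
            in fair_feasible S1 S2 k1 k2 C \<and>
               (\<forall>s\<in>S1 \<union> S2. dist_set d s C \<le> 3 * opt_radius d S1 S2 k1 k2))"
proof -
  note fin = assms(1) and disj = assms(2) and met = assms(3) and xs1 = assms(5) and xs2 = assms(6)
    and run = assms(7)
  define R where "R = opt_radius d S1 S2 k1 k2"
  have finF: "finite {C. fair_feasible S1 S2 k1 k2 C}"
    by (rule finite_subset[of _ "Pow (S1 \<union> S2)"]) (use fin in \<open>auto simp: fair_feasible_def\<close>)
  have neF: "{C. fair_feasible S1 S2 k1 k2 C} \<noteq> {}"
    using fair_feasible_def[of S1 S2 k1 k2 "{}"] by auto
  obtain Cs where Csf: "fair_feasible S1 S2 k1 k2 Cs" and RCs: "R = fkc_cost d (S1 \<union> S2) Cs"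
    using inf_attained[OF finF neF, of "fkc_cost d (S1 \<union> S2)"] unfolding R_def opt_radius_def by auto
  have CsS: "Cs \<subseteq> S1 \<union> S2" using Csf unfolding fair_feasible_def by auto
  have finCs: "finite Cs" using CsS fin finite_subset by blast
  show ?thesis
  proof (cases "S1 \<union> S2 = {}")
    case True
    then have "xs1 = []" "xs2 = []" using xs1 xs2 by auto
    then have "algB_run d S1 S2 k1 (2 * opt_radius d S1 S2 k1 k2) []
           ({}, {}, {}, Map.empty) (G1, G2, Gsub, \<sigma>)" using run by simp
    then have "G1 = {}" "G2 = {}" by (auto elim: algB_run.cases)
    then show ?thesis
      by (intro exI[of _ "{}"]) (simp add: Let_def fair_feasible_def True)
  next
    case False
    then obtain s0 where s0: "s0 \<in> S1 \<union> S2" by blast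
    have "dist_set d s0 Cs \<ge> 0" unfolding dist_set_def
      by (rule INF_greatest) (use met s0 CsS in \<open>auto simp: metric_on_def\<close>)
    also have "dist_set d s0 Cs \<le> R" unfolding RCs fkc_cost_def by (rule SUP_upper[OF s0])
    finally have R0: "0 \<le> R" .
    show ?thesis
    proof (cases R rule: ereal_cases)
      case (real r)
      have r0: "0 \<le> r" using R0 real by simp
      have cov: "\<forall>s\<in>S1 \<union> S2. \<exists>c\<in>Cs. d s c \<le> r"
      proof
        fix s assume s: "s \<in> S1 \<union> S2"
        have "dist_set d s Cs \<le> ereal r" using real unfolding RCs fkc_cost_def
          by (metis SUP_upper s)
        then show "\<exists>c\<in>Cs. d s c \<le> r" using ds_le[OF finCs] by blast
      qed
      have run': "algB_run d S1 S2 k1 (2 * ereal r) (xs1 @ xs2) ({}, {}, {}, Map.empty) (G1, G2, Gsub, \<sigma>)"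
        using run real unfolding R_def by simp
      have "3 * opt_radius d S1 S2 k1 k2 = 3 * ereal r" using real unfolding R_def by simp
      then show ?thesis
        using main_real[OF met disj r0 fin xs1 xs2 run' Csf cov] by simp
    next
      case PInf
      have run': "algB_run d S1 S2 k1 \<infinity> (xs1 @ xs2) ({}, {}, {}, Map.empty) (G1, G2, Gsub, \<sigma>)"
        using run PInf unfolding R_def by simp
      have "G1 = {} \<and> G2 = {}" by (rule inf_run[OF run'])
      moreover have "3 * opt_radius d S1 S2 k1 k2 = \<infinity>" using PInf unfolding R_def by simp
      ultimately show ?thesis
        by (intro exI[of _ "{}"]) (simp add: Let_def fair_feasible_def)
    next
      case MInf
      then show ?thesis using R0 by simp
    qed
  qed
qed

end
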